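(* Let $V$ be countably infinite, $\psi:K_V\to\mathbb N$ a fixed bijection, and $\sigma$ a permutation of $\mathbb N$. For $f:\mathscr{G}(V)\to\mathbb R$ and $G\in\mathscr{G}(V)\setminus\{\emptyset,K_V\}$ define the $\sigma$-twisted derivative $$f'_\sigma(G) := \lim_{G_1\to G,\ G_1\in\mathscr{G}'(V)\setminus\{G\}}\frac{f(G_1)-f(G)}{\|G_1\|_{\sigma\circ\psi,2}-\|G\|_{\sigma\circ\psi,2}}$$ (if the limit exists). (a) If $\sigma\in S_\infty$ and $f'(G)$ exists, then $f'_\sigma(G)$ exists and equals $f'(G)$. (b) If $\sigma\notin S_\infty$, $G\in\mathscr{G}'(V)$, and $f'(G)$ exists and is nonzero, then $f'_\sigma(G)$ does not exist.
   Context: $K_V$ is the set of $2$-element subsets of $V$; $\mathscr{G}(V)$ is the set of simple graphs on $V$ identified with their edge sets, with the product topology of $\{0,1\}^{K_V}$; $\mathscr{G}'(V)$ is the set of graphs $G$ with both $G$ and $K_V\setminus G$ infinite. $\mathbb N=\{1,2,\dots\}$. For a bijection $\chi:K_V\to\mathbb N$, $\|G\|_{\chi,2}:=\sum_{e\in G}2^{-\chi(e)}$. $f'(G) := f'_{\mathrm{id}}(G)$ is the derivative with respect to $\psi$, i.e. the same limit with $\|\cdot\|_{\psi,2}$ in the denominator (limits taken in the product topology). $S_\infty$ is the group of permutations of $\mathbb N$ fixing all but finitely many elements. *)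

theory Defs
  imports "HOL-Analysis.Analysis"
begin

definition Kset :: "'v set \<Rightarrow> 'v set set" where
  "Kset V = {e. \<exists>x y. x \<in> V \<and> y \<in> V \<and> x \<noteq> y \<and> e = {x, y}}"

text \<open>Simple graphs on V, identified with their edge sets.\<close>
definition graphs :: "'v set \<Rightarrow> 'v set set set" where
  "graphs V = {G. G \<subseteq> Kset V}"

definition graphs' :: "'v set \<Rightarrow> 'v set set set" where
  "graphs' V = {G. G \<subseteq> Kset V \<and> infinite G \<and> infinite (Kset V - G)}"

definition gnorm :: "('v set \<Rightarrow> nat) \<Rightarrow> 'v set set \<Rightarrow> real" where
  "gnorm chi G = infsum (\<lambda>e. (1/2::real) ^ chi e) G"

text \<open>Neighbourhood filter of G in the product topology of {0,1}^{K_V}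
  (basic open sets are cylinders fixing membership of finitely many edges),
  restricted to the set S.\<close>
definition graph_at_within :: "'v set \<Rightarrow> 'v set set \<Rightarrow> 'v set set set \<Rightarrow> 'v set set filter" where
  "graph_at_within V G S =
     inf (INF F\<in>{F. finite F \<and> F \<subseteq> Kset V}. principal {H. H \<subseteq> Kset V \<and> H \<inter> F = G \<inter> F})
     (principal S)"

definition has_gderiv :: "'v set \<Rightarrow> ('v set \<Rightarrow> nat) \<Rightarrow> ('v set set \<Rightarrow> real) \<Rightarrow> 'v set set \<Rightarrow> real \<Rightarrow> bool" where
  "has_gderiv V chi f G L \<longleftrightarrow>
     ((\<lambda>G1. (f G1 - f G) / (gnorm chi G1 - gnorm chi G)) \<longlongrightarrow> L)
       (graph_at_within V G (graphs' V - {G}))"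

definition S_inf :: "(nat \<Rightarrow> nat) set" where
  "S_inf = {\<sigma>. bij_betw \<sigma> {1..} {1..} \<and> finite {n \<in> {1..}. \<sigma> n \<noteq> n}}"

end

theory Submission
  imports Defs
begin


lemma bij_not_eventually_less:
  assumes b: "bij_betw \<sigma> {1..} {1..}" and h: "\<forall>n\<ge>N. \<sigma> n < (n::nat)"
  shows False
proof -
  define m0 where "m0 = (\<Sum>n<N. \<sigma> n)"
  define K where "K = N + m0 + 1"
  have inj: "inj_on \<sigma> {1..K}" using b unfolding bij_betw_def by (auto intro: inj_on_subset)
  have sub: "\<sigma> ` {1..K} \<subseteq> {1..<K}"
  proof
    fix x assume "x \<in> \<sigma> ` {1..K}"
    then obtain n where n: "n \<in> {1..K}" "x = \<sigma> n" by auto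
    have "x \<ge> 1" using b n unfolding bij_betw_def by auto
    moreover have "x < K"
    proof (cases "n \<ge> N")
      case True then show ?thesis using h n by fastforce
    next
      case False
      then have "\<sigma> n \<le> m0" unfolding m0_def
        by (intro member_le_sum) auto
      then show ?thesis using n K_def by simp
    qed
    ultimately show "x \<in> {1..<K}" by simp
  qed
  have "card (\<sigma> ` {1..K}) = K" using card_image[OF inj] by simp
  moreover have "card (\<sigma> ` {1..K}) \<le> K - 1" using card_mono[OF _ sub] by simp
  ultimately show False using K_def by simp
qed

lemma bij_not_eventually_greater:
  assumes b: "bij_betw \<sigma> {1..} {1..}" and h0: "\<forall>n\<ge>N0. \<sigma> n > (n::nat)"
  shows False
proof -
  define N where "N = Suc N0"
  have h: "\<forall>n\<ge>N. \<sigma> n > n" using h0 N_def by auto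
  have sub: "{1..N} \<subseteq> \<sigma> ` {1..<N}"
  proof
    fix m assume m: "m \<in> {1..N}"
    then obtain p where p: "p \<in> {1..}" "m = \<sigma> p" using b unfolding bij_betw_def
      by (metis atLeastAtMost_iff atLeast_iff image_iff)
    have "p < N"
    proof (rule ccontr)
      assume "\<not> p < N" then have "\<sigma> p > p" "p \<ge> N" using h by auto
      then show False using m p by auto
    qed
    then show "m \<in> \<sigma> ` {1..<N}" using p by auto
  qed
  have "N \<le> card (\<sigma> ` {1..<N})" using card_mono[OF _ sub] by simp
  moreover have "card (\<sigma> ` {1..<N}) \<le> N - 1" using card_image_le[of "{1..<N}" \<sigma>] by simp
  ultimately show False using N_def by simp
qed

lemma bij_not_Sinf_varies:
  assumes b: "bij_betw \<sigma> {1..} {1..}" and ns: "\<sigma> \<notin> S_inf"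
  shows "\<exists>n m. n \<ge> N \<and> m \<ge> N \<and> \<sigma> n + m > \<sigma> m + (n::nat)"
proof (rule ccontr)
  assume "\<not> ?thesis"
  then have le: "\<And>n m. n \<ge> N \<Longrightarrow> m \<ge> N \<Longrightarrow> \<sigma> n + m \<le> \<sigma> m + n" by force
  define N' where "N' = N + 1"
  have eq: "\<And>n. n \<ge> N' \<Longrightarrow> int (\<sigma> n) - int n = int (\<sigma> N') - int N'"
    using le N'_def by (smt (verit, best) le_add1 le_trans of_nat_add of_nat_mono)
  consider "int (\<sigma> N') - int N' < 0" | "int (\<sigma> N') - int N' > 0" | "int (\<sigma> N') - int N' = 0" by linarith
  then show False
  proof cases
    case 1
    have "\<forall>n\<ge>N'. \<sigma> n < n"
    proof (intro allI impI)
      fix n assume "n \<ge> N'" then have "int (\<sigma> n) - int n < 0" using eq[of n] 1 by linarith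
      then show "\<sigma> n < n" by simp
    qed
    then show False using bij_not_eventually_less[OF b] by blast
  next
    case 2
    have "\<forall>n\<ge>N'. \<sigma> n > n"
    proof (intro allI impI)
      fix n assume "n \<ge> N'" then have "int (\<sigma> n) - int n > 0" using eq[of n] 2 by linarith
      then show "\<sigma> n > n" by simp
    qed
    then show False using bij_not_eventually_greater[OF b] by blast
  next
    case 3
    have "{n \<in> {1..}. \<sigma> n \<noteq> n} \<subseteq> {..<N'}"
    proof
      fix n assume n: "n \<in> {n \<in> {1..}. \<sigma> n \<noteq> n}"
      show "n \<in> {..<N'}"
      proof (rule ccontr)
        assume "n \<notin> {..<N'}" then have "n \<ge> N'" by simp
        then have "int (\<sigma> n) - int n = 0" using eq[of n] 3 by linarith
        then show False using n by simp
      qed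
    qed
    then have "finite {n \<in> {1..}. \<sigma> n \<noteq> n}" using finite_subset by blast
    then show False using ns b unfolding S_inf_def by auto
  qed
qed


lemma wsum:
  assumes "inj_on (chi::'a \<Rightarrow> nat) A"
  shows "(\<lambda>e. (1/2::real) ^ chi e) summable_on A"
proof -
  have "(\<lambda>n::nat. (1/2::real) ^ n) summable_on UNIV"
    by (rule summable_nonneg_imp_summable_on) (auto intro: summable_geometric)
  then have "(\<lambda>n::nat. (1/2::real) ^ n) summable_on chi ` A"
    using summable_on_subset_banach by blast
  then have "(\<lambda>n::nat. (1/2::real) ^ n) \<circ> chi summable_on A"
    using summable_on_reindex[OF assms] by blast
  then show ?thesis by (simp add: o_def)
qed

lemma eventually_gaw:
  assumes "eventually P (graph_at_within V G S)"
  shows "\<exists>F. finite F \<and> F \<subseteq> Kset V \<and> (\<forall>H. H \<subseteq> Kset V \<longrightarrow> H \<inter> F = G \<inter> F \<longrightarrow> H \<in> S \<longrightarrow> P H)"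
proof -
  let ?B = "{F. finite F \<and> F \<subseteq> Kset V}"
  let ?Fl = "\<lambda>F. principal {H. H \<subseteq> Kset V \<and> H \<inter> F = G \<inter> F}"
  have "eventually (\<lambda>H. H \<in> S \<longrightarrow> P H) (INF F\<in>?B. ?Fl F)"
    using assms unfolding graph_at_within_def eventually_inf_principal by simp
  moreover have "eventually Q (INF F\<in>?B. ?Fl F) = (\<exists>b\<in>?B. eventually Q (?Fl b))" for Q
  proof (rule eventually_INF_base)
    show "?B \<noteq> {}" by blast
    fix a b assume "a \<in> ?B" "b \<in> ?B"
    then show "\<exists>x\<in>?B. ?Fl x \<le> inf (?Fl a) (?Fl b)"
      by (intro bexI[of _ "a \<union> b"]) auto
  qed
  ultimately obtain F where "F \<in> ?B" "eventually (\<lambda>H. H \<in> S \<longrightarrow> P H) (?Fl F)" by blast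
  then show ?thesis unfolding eventually_principal by blast
qed

lemma eventually_gaw_intro:
  assumes "finite F" "F \<subseteq> Kset V" "\<And>H. H \<subseteq> Kset V \<Longrightarrow> H \<inter> F = G \<inter> F \<Longrightarrow> P H"
  shows "eventually P (graph_at_within V G S)"
proof -
  have "eventually P (INF F\<in>{F. finite F \<and> F \<subseteq> Kset V}. principal {H. H \<subseteq> Kset V \<and> H \<inter> F = G \<inter> F})"
    by (rule eventually_INF1[of F]) (use assms in \<open>auto simp: eventually_principal\<close>)
  then show ?thesis unfolding graph_at_within_def
    using eventually_inf_principal by (metis (mono_tags, lifting) eventually_mono)
qed

definition flip :: "'a \<Rightarrow> 'a set \<Rightarrow> 'a set" where
  "flip e G = (if e \<in> G then G - {e} else insert e G)"

lemma gnorm_flip: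
  assumes "inj_on chi (Kset V)" "G \<subseteq> Kset V" "e \<in> Kset V"
  shows "gnorm chi (flip e G) - gnorm chi G = (if e \<in> G then -1 else 1) * (1/2) ^ chi e"
proof (cases "e \<in> G")
  case True
  have s: "(\<lambda>e. (1/2::real) ^ chi e) summable_on (G - {e})"
    using wsum[OF assms(1)] summable_on_subset_banach assms by blast
  have "G = insert e (G - {e})" using True by auto
  then have "gnorm chi G = (1/2) ^ chi e + gnorm chi (G - {e})"
    unfolding gnorm_def using infsum_insert[OF s, of e] by (metis Diff_iff insertI1)
  then show ?thesis using True unfolding flip_def by simp
next
  case False
  have s: "(\<lambda>e. (1/2::real) ^ chi e) summable_on G"
    using wsum[OF assms(1)] summable_on_subset_banach assms by blast
  show ?thesis using False infsum_insert[OF s False] unfolding flip_def gnorm_def by simp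
qed

lemma flip_graphs':
  assumes "G \<in> graphs' V" "e \<in> Kset V"
  shows "flip e G \<in> graphs' V - {G}" "flip e G \<subseteq> Kset V"
proof -
  have g: "G \<subseteq> Kset V" "infinite G" "infinite (Kset V - G)" using assms unfolding graphs'_def by auto
  have "Kset V - G - {e} \<subseteq> Kset V - flip e G" unfolding flip_def by auto
  moreover have "infinite (Kset V - G - {e})" using g(3) by simp
  ultimately have "infinite (Kset V - flip e G)" using infinite_super by blast
  moreover have "infinite (flip e G)" using g(2) unfolding flip_def by auto
  moreover show "flip e G \<subseteq> Kset V" using g(1) assms(2) unfolding flip_def by auto
  moreover have "flip e G \<noteq> G" unfolding flip_def by auto
  ultimately show "flip e G \<in> graphs' V - {G}" unfolding graphs'_def by auto
qed



lemma R0: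
  fixes a b L :: real
  assumes "\<bar>a - L\<bar> < \<bar>L\<bar>/10" "\<bar>b\<bar> < \<bar>L\<bar>/10" "b * 2^n = a * 2^k" "k \<ge> n" "L \<noteq> 0"
  shows False
proof -
  have "\<bar>b\<bar> * 2^n = \<bar>a\<bar> * 2^k" using assms(3) by (metis abs_mult abs_of_nonneg zero_le_numeral zero_le_power)
  moreover have "(2::real)^n \<le> 2^k" using assms(4) by (simp add: power_increasing)
  ultimately have "\<bar>a\<bar> * 2^n \<le> \<bar>b\<bar> * 2^n" by (metis abs_ge_zero mult_left_mono)
  then have "\<bar>a\<bar> \<le> \<bar>b\<bar>" by simp
  then show False using assms by linarith
qed

lemma R1:
  fixes an am bn bm L M :: real
  assumes "\<bar>an - L\<bar> < min \<bar>L\<bar> \<bar>M\<bar>/10" "\<bar>am - L\<bar> < min \<bar>L\<bar> \<bar>M\<bar>/10"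
    "\<bar>bn - M\<bar> < min \<bar>L\<bar> \<bar>M\<bar>/10" "\<bar>bm - M\<bar> < min \<bar>L\<bar> \<bar>M\<bar>/10"
    "bn * 2^n = an * 2^sn" "bm * 2^m = am * 2^sm" "sn + m > sm + (n::nat)" "L \<noteq> 0" "M \<noteq> 0"
  shows False
proof -
  define X :: real where "X = 2^(n+sm)"
  define Y :: real where "Y = 2^(sn+m)"
  have X: "X > 0" unfolding X_def by simp
  have XY: "2 * X \<le> Y" unfolding X_def Y_def
    using power_increasing[of "Suc (n+sm)" "sn+m" "2::real"] assms(7) by simp
  have "bn * am * X = an * bm * Y"
  proof -
    have "bn * am * X = (bn * 2^n) * (am * 2^sm)" unfolding X_def by (simp add: power_add)
    also have "\<dots> = (an * 2^sn) * (bm * 2^m)" using assms(5,6) by simp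
    also have "\<dots> = an * bm * Y" unfolding Y_def by (simp add: power_add)
    finally show ?thesis .
  qed
  then have eq: "\<bar>bn\<bar> * \<bar>am\<bar> * X = \<bar>an\<bar> * \<bar>bm\<bar> * Y"
    using X by (metis abs_mult abs_of_pos Y_def zero_less_numeral zero_less_power)
  have "\<bar>an\<bar> * \<bar>bm\<bar> * (2 * X) \<le> \<bar>an\<bar> * \<bar>bm\<bar> * Y" using XY by (simp add: mult_left_mono)
  then have "2 * (\<bar>an\<bar> * \<bar>bm\<bar>) * X \<le> \<bar>bn\<bar> * \<bar>am\<bar> * X" using eq by (simp add: algebra_simps)
  then have ineq: "2 * (\<bar>an\<bar> * \<bar>bm\<bar>) \<le> \<bar>bn\<bar> * \<bar>am\<bar>" using X by simp
  have a: "\<bar>an - L\<bar> < \<bar>L\<bar>/10" "\<bar>am - L\<bar> < \<bar>L\<bar>/10" "\<bar>bn - M\<bar> < \<bar>M\<bar>/10" "\<bar>bm - M\<bar> < \<bar>M\<bar>/10"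
    using assms(1-4) by auto
  have l1: "\<bar>an\<bar> \<ge> 9/10 * \<bar>L\<bar>" "\<bar>am\<bar> \<le> 11/10 * \<bar>L\<bar>" using a by arith+
  have l2: "\<bar>bm\<bar> \<ge> 9/10 * \<bar>M\<bar>" "\<bar>bn\<bar> \<le> 11/10 * \<bar>M\<bar>" using a by arith+
  have "(9/10 * \<bar>L\<bar>) * (9/10 * \<bar>M\<bar>) \<le> \<bar>an\<bar> * \<bar>bm\<bar>" using l1 l2 by (intro mult_mono) auto
  moreover have "\<bar>bn\<bar> * \<bar>am\<bar> \<le> (11/10 * \<bar>M\<bar>) * (11/10 * \<bar>L\<bar>)" using l1 l2 by (intro mult_mono) auto
  ultimately have "2 * (81/100) * (\<bar>L\<bar> * \<bar>M\<bar>) \<le> (121/100) * (\<bar>L\<bar> * \<bar>M\<bar>)" using ineq by (simp add: algebra_simps)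
  moreover have "\<bar>L\<bar> * \<bar>M\<bar> > 0" using assms(8,9) by simp
  ultimately show False by simp
qed


lemma part_a:
  assumes psi: "bij_betw \<psi> (Kset V) {1..}" and sb: "bij_betw \<sigma> {1..} {1..}"
    and fin: "finite {n \<in> {1..}. \<sigma> n \<noteq> (n::nat)}"
    and G: "G \<subseteq> Kset V"
    and L: "has_gderiv V \<psi> f G L"
  shows "has_gderiv V (\<sigma> \<circ> \<psi>) f G L"
proof -
  define E0 where "E0 = {e \<in> Kset V. \<sigma> (\<psi> e) \<noteq> \<psi> e}"
  have injp: "inj_on \<psi> (Kset V)" using psi bij_betw_def by blast
  have injs: "inj_on (\<sigma> \<circ> \<psi>) (Kset V)"
    using psi sb unfolding bij_betw_def by (metis comp_inj_on)
  have "\<psi> ` E0 \<subseteq> {n \<in> {1..}. \<sigma> n \<noteq> n}" using psi unfolding E0_def bij_betw_def by auto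
  then have "finite (\<psi> ` E0)" using fin finite_subset by blast
  then have finE: "finite E0" using finite_imageD inj_on_subset[OF injp] E0_def by (metis (no_types, lifting) mem_Collect_eq subsetI)
  define w1 where "w1 = (\<lambda>e. (1/2::real) ^ \<psi> e)"
  define w2 where "w2 = (\<lambda>e. (1/2::real) ^ (\<sigma> \<circ> \<psi>) e)"
  define d where "d = (\<lambda>e. w2 e - w1 e)"
  have key: "gnorm (\<sigma> \<circ> \<psi>) H = gnorm \<psi> H + sum d (H \<inter> E0)" if H: "H \<subseteq> Kset V" for H
  proof -
    have s1: "w1 summable_on H" unfolding w1_def using wsum[OF injp] summable_on_subset_banach H by blast
    have s2: "w2 summable_on H" unfolding w2_def using wsum[OF injs] summable_on_subset_banach H by blast
    have sd: "d summable_on H" using summable_on_add[OF s2 summable_on_uminus[THEN iffD2, OF s1]] unfolding d_def by simp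
    have "infsum w2 H = infsum (\<lambda>e. w1 e + d e) H" unfolding d_def by simp
    also have "\<dots> = infsum w1 H + infsum d H" by (rule infsum_add[OF s1 sd])
    also have "infsum d H = infsum d (H \<inter> E0)"
      by (rule infsum_cong_neutral) (use H in \<open>auto simp: d_def w1_def w2_def E0_def\<close>)
    also have "\<dots> = sum d (H \<inter> E0)" using finE by (simp add: infsum_finite)
    finally show ?thesis unfolding gnorm_def w1_def w2_def by simp
  qed
  have ev: "eventually (\<lambda>H. (f H - f G) / (gnorm \<psi> H - gnorm \<psi> G) =
        (f H - f G) / (gnorm (\<sigma> \<circ> \<psi>) H - gnorm (\<sigma> \<circ> \<psi>) G))
      (graph_at_within V G (graphs' V - {G}))"
  proof (rule eventually_gaw_intro[OF finE])
    show "E0 \<subseteq> Kset V" unfolding E0_def by auto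
    fix H assume "H \<subseteq> Kset V" "H \<inter> E0 = G \<inter> E0"
    then show "(f H - f G) / (gnorm \<psi> H - gnorm \<psi> G) =
        (f H - f G) / (gnorm (\<sigma> \<circ> \<psi>) H - gnorm (\<sigma> \<circ> \<psi>) G)"
      using key[of H] key[OF G] by simp
  qed
  show ?thesis using L ev unfolding has_gderiv_def by (rule Lim_transform_eventually)
qed



lemma part_b:
  assumes psi: "bij_betw \<psi> (Kset V) {1..}" and sb: "bij_betw \<sigma> {1..} {1..}"
    and ns: "\<sigma> \<notin> S_inf" and G: "G \<in> graphs' V"
    and L: "has_gderiv V \<psi> f G L" and L0: "L \<noteq> 0"
    and M: "has_gderiv V (\<sigma> \<circ> \<psi>) f G M"
  shows False
proof -
  have injp: "inj_on \<psi> (Kset V)" using psi bij_betw_def by blast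
  have injs: "inj_on (\<sigma> \<circ> \<psi>) (Kset V)"
    using psi sb unfolding bij_betw_def by (metis comp_inj_on)
  have GK: "G \<subseteq> Kset V" using G unfolding graphs'_def by auto
  define q1 where "q1 = (\<lambda>H. (f H - f G) / (gnorm \<psi> H - gnorm \<psi> G))"
  define q2 where "q2 = (\<lambda>H. (f H - f G) / (gnorm (\<sigma> \<circ> \<psi>) H - gnorm (\<sigma> \<circ> \<psi>) G))"
  define \<delta> where "\<delta> = (if M = 0 then \<bar>L\<bar>/10 else min \<bar>L\<bar> \<bar>M\<bar> / 10)"
  have dpos: "\<delta> > 0" unfolding \<delta>_def using L0 by auto
  have "eventually (\<lambda>H. dist (q1 H) L < \<delta>) (graph_at_within V G (graphs' V - {G}))"
    using L dpos unfolding has_gderiv_def tendsto_iff q1_def by blast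
  moreover have "eventually (\<lambda>H. dist (q2 H) M < \<delta>) (graph_at_within V G (graphs' V - {G}))"
    using M dpos unfolding has_gderiv_def tendsto_iff q2_def by blast
  ultimately have "eventually (\<lambda>H. dist (q1 H) L < \<delta> \<and> dist (q2 H) M < \<delta>) (graph_at_within V G (graphs' V - {G}))"
    by (rule eventually_conj)
  from eventually_gaw[OF this] obtain F where F: "finite F" "F \<subseteq> Kset V"
    and FP: "\<And>H. H \<subseteq> Kset V \<Longrightarrow> H \<inter> F = G \<inter> F \<Longrightarrow> H \<in> graphs' V - {G} \<Longrightarrow>
        dist (q1 H) L < \<delta> \<and> dist (q2 H) M < \<delta>" by blast
  define N where "N = Suc (\<Sum>e\<in>F. \<psi> e)"
  define ee where "ee = (\<lambda>n. inv_into (Kset V) \<psi> n)"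
  define a where "a = (\<lambda>n. q1 (flip (ee n) G))"
  define b where "b = (\<lambda>n. q2 (flip (ee n) G))"
  have pr: "\<bar>a n - L\<bar> < \<delta> \<and> \<bar>b n - M\<bar> < \<delta> \<and> b n * 2^n = a n * 2^(\<sigma> n)" if n: "n \<ge> N" for n
  proof -
    have n1: "n \<in> {1..}" using n N_def by simp
    have eK: "ee n \<in> Kset V" unfolding ee_def using psi n1
      by (metis bij_betw_def inv_into_into)
    have pe: "\<psi> (ee n) = n" unfolding ee_def using psi n1
      by (metis bij_betw_def f_inv_into_f)
    have "ee n \<notin> F"
    proof
      assume "ee n \<in> F"
      then have "\<psi> (ee n) \<le> (\<Sum>e\<in>F. \<psi> e)" using F(1) by (intro member_le_sum) auto
      then show False using pe n N_def by simp
    qed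
    then have "flip (ee n) G \<inter> F = G \<inter> F" unfolding flip_def by auto
    then have d: "dist (a n) L < \<delta> \<and> dist (b n) M < \<delta>"
      unfolding a_def b_def using FP flip_graphs'[OF G eK] by blast
    define s :: real where "s = (if ee n \<in> G then -1 else 1)"
    have s: "s * s = 1" unfolding s_def by simp
    define D where "D = f (flip (ee n) G) - f G"
    have "gnorm \<psi> (flip (ee n) G) - gnorm \<psi> G = s * (1/2)^n"
      using gnorm_flip[OF injp GK eK] pe s_def by simp
    then have an: "a n = D / (s * (1/2)^n)" unfolding a_def q1_def D_def by simp
    have "gnorm (\<sigma> \<circ> \<psi>) (flip (ee n) G) - gnorm (\<sigma> \<circ> \<psi>) G = s * (1/2)^(\<sigma> n)"
      using gnorm_flip[OF injs GK eK] pe s_def by simp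
    then have bn: "b n = D / (s * (1/2)^(\<sigma> n))" unfolding b_def q2_def D_def by simp
    have "s \<noteq> 0" unfolding s_def by simp
    then have "b n * 2^n = a n * 2^(\<sigma> n)" unfolding an bn
      by (simp add: power_one_over field_simps)
    then show ?thesis using d by (simp add: dist_real_def)
  qed
  show False
  proof (cases "M = 0")
    case True
    obtain n where n: "n \<ge> N" "\<sigma> n \<ge> n"
      using bij_not_eventually_less[OF sb, of N] by (meson not_less)
    show False using pr[OF n(1)] True \<delta>_def R0[of "a n" L "b n" n "\<sigma> n"] n L0 by auto
  next
    case False
    obtain n m where nm: "n \<ge> N" "m \<ge> N" "\<sigma> n + m > \<sigma> m + n"
      using bij_not_Sinf_varies[OF sb ns, of N] by blast
    show False using pr[OF nm(1)] pr[OF nm(2)] False \<delta>_def nm(3) L0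
      R1[of "a n" L M "a m" "b n" "b m" n "\<sigma> n" m "\<sigma> m"] by auto
  qed
qed

theorem theorem3p10:
  fixes V :: "'v set" and \<psi> :: "'v set \<Rightarrow> nat" and \<sigma> :: "nat \<Rightarrow> nat"
    and f :: "'v set set \<Rightarrow> real" and G :: "'v set set"
  assumes "countable V" and "infinite V"
    and "bij_betw \<psi> (Kset V) {1..}"
    and "bij_betw \<sigma> {1..} {1..}"
    and "G \<in> graphs V" and "G \<noteq> {}" and "G \<noteq> Kset V"
  shows "(\<sigma> \<in> S_inf \<longrightarrow>
           (\<forall>L. has_gderiv V \<psi> f G L \<longrightarrow> has_gderiv V (\<sigma> \<circ> \<psi>) f G L))
       \<and> (\<sigma> \<notin> S_inf \<and> G \<in> graphs' V \<longrightarrow>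
           (\<forall>L. has_gderiv V \<psi> f G L \<and> L \<noteq> 0 \<longrightarrow> \<not> (\<exists>M. has_gderiv V (\<sigma> \<circ> \<psi>) f G M)))"
proof (intro conjI impI allI)
  fix L assume "\<sigma> \<in> S_inf" "has_gderiv V \<psi> f G L"
  then show "has_gderiv V (\<sigma> \<circ> \<psi>) f G L"
    using part_a[OF assms(3,4)] assms(5) unfolding S_inf_def graphs_def by auto
next
  fix L assume "\<sigma> \<notin> S_inf \<and> G \<in> graphs' V" "has_gderiv V \<psi> f G L \<and> L \<noteq> 0"
  then show "\<not> (\<exists>M. has_gderiv V (\<sigma> \<circ> \<psi>) f G M)"
    using part_b[OF assms(3,4)] by blast
qed

end
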